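(* Consider an underactuated robotic system with configuration $\mathbf{q}=(\mathbf{q}_1,\mathbf{q}_2)\in\mathcal{Q}$, $\mathbf{q}_1\in\mathcal{Q}_1\subset\mathbb{R}^{n_1}$ (actuated), $\mathbf{q}_2\in\mathcal{Q}_2\subset\mathbb{R}^{n_2}$ (passive), with dynamics $$\begin{bmatrix}\mathbf{D}_{11}(\mathbf{q})&\mathbf{D}_{12}(\mathbf{q})\\ \mathbf{D}_{21}(\mathbf{q})&\mathbf{D}_{22}(\mathbf{q})\end{bmatrix}\begin{bmatrix}\ddot{\mathbf{q}}_1\\ \ddot{\mathbf{q}}_2\end{bmatrix}+\begin{bmatrix}\mathbf{H}_1(\mathbf{q},\dot{\mathbf{q}})\\ \mathbf{H}_2(\mathbf{q},\dot{\mathbf{q}})\end{bmatrix}=\begin{bmatrix}\mathbf{B}_1\\ \mathbf{0}\end{bmatrix}\mathbf{u},\qquad \mathbf{u}\in\mathbb{R}^m,$$ and let $\dot{\mathbf{x}}=\mathbf{f}(\mathbf{x})+\mathbf{g}(\mathbf{x})\mathbf{u}$, $\mathbf{x}=(\mathbf{q},\dot{\mathbf{q}})$, be its control affine form, $\mathbf{f}(\mathbf{x})=(\dot{\mathbf{q}},-\mathbf{D}(\mathbf{q})^{-1}\mathbf{H}(\mathbf{q},\dot{\mathbf{q}}))$, $\mathbf{g}(\mathbf{x})=(\mathbf{0},\mathbf{D}(\mathbf{q})^{-1}\mathbf{B})$. Let $h_{0,1}:\mathcal{Q}_1\to\mathbb{R}$ be continuously differentiable, defining $\mathcal{C}_0=\{\mathbf{q}\in\mathcal{Q}:h_{0,1}(\mathbf{q}_1)\ge0\}$.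 Suppose $\mathbf{B}_1\in\mathbb{R}^{n_1\times m}$ is pseudo-invertible and $\mathbf{k}_{0,1}:\mathcal{Q}_1\to\mathbb{R}^{n_1}$ is continuously differentiable with $\nabla h_{0,1}(\mathbf{q}_1)\cdot\mathbf{k}_{0,1}(\mathbf{q}_1)>-\alpha(h_{0,1}(\mathbf{q}_1))$ for all $\mathbf{q}_1\in\mathcal{Q}_1$, for some extended class $\mathcal{K}_\infty$ function $\alpha$. For $\mu>0$ let $$h(\mathbf{q},\dot{\mathbf{q}})=h_{0,1}(\mathbf{q}_1)-\frac{1}{2\mu}(\dot{\mathbf{q}}_1-\mathbf{k}_{0,1}(\mathbf{q}_1))^\top\bar{\mathbf{D}}_1(\mathbf{q})(\dot{\mathbf{q}}_1-\mathbf{k}_{0,1}(\mathbf{q}_1)),$$ where $\bar{\mathbf{D}}_1(\mathbf{q})=\mathbf{D}_{11}(\mathbf{q})-\mathbf{D}_{12}(\mathbf{q})\mathbf{D}_{22}(\mathbf{q})^{-1}\mathbf{D}_{21}(\mathbf{q})$. Then $h$ is a control barrier function for $\dot{\mathbf{x}}=\mathbf{f}(\mathbf{x})+\mathbf{g}(\mathbf{x})\mathbf{u}$ on $\mathcal{C}=\{(\mathbf{q},\dot{\mathbf{q}}):h(\mathbf{q},\dot{\mathbf{q}})\ge0\}$.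
   Context: $\mathbf{D}(\mathbf{q})$ (the block matrix) is the symmetric positive definite, continuously differentiable inertia matrix, so $\mathbf{D}_{22}$ and the Schur complement $\bar{\mathbf{D}}_1$ are positive definite; $\mathbf{H}=\mathbf{C}\dot{\mathbf{q}}+\mathbf{G}$ collects Coriolis and gravity terms. "Pseudo-invertible" is used in the sense that $\mathbf{v}^\top\mathbf{B}_1=\mathbf{0}$ implies $\mathbf{v}=\mathbf{0}$ (full row rank). An extended class $\mathcal{K}_\infty$ function is a continuous strictly increasing $\alpha:\mathbb{R}\to\mathbb{R}$ with $\alpha(0)=0$, $\alpha(s)\to\pm\infty$ as $s\to\pm\infty$. With $L_{\mathbf{f}}h=\nabla h\cdot\mathbf{f}$, $L_{\mathbf{g}}h=\nabla h^\top\mathbf{g}$, a continuously differentiable $h$ is a CBF on $\{h\ge0\}$ if there exists an extended class $\mathcal{K}_\infty$ function $\alpha$ such that for all states $\mathbf{x}$, $\sup_{\mathbf{u}\in\mathbb{R}^m}\{L_{\mathbf{f}}h(\mathbf{x})+L_{\mathbf{g}}h(\mathbf{x})\mathbf{u}\}>-\alpha(h(\mathbf{x}))$. *)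

theory Defs
  imports "HOL-Analysis.Analysis"
begin

definition C1_on :: "'a::euclidean_space set \<Rightarrow> ('a \<Rightarrow> 'b::real_normed_vector) \<Rightarrow> bool" where
  "C1_on S f \<longleftrightarrow> (\<exists>f'. (\<forall>x\<in>S. (f has_derivative blinfun_apply (f' x)) (at x)) \<and> continuous_on S f')"

definition ext_class_Kinf :: "(real \<Rightarrow> real) \<Rightarrow> bool" where
  "ext_class_Kinf \<alpha> \<longleftrightarrow> continuous_on UNIV \<alpha> \<and> strict_mono \<alpha> \<and> \<alpha> 0 = 0 \<and>
     filterlim \<alpha> at_top at_top \<and> filterlim \<alpha> at_bot at_bot"

definition Lie_f :: "('x::real_normed_vector \<Rightarrow> real) \<Rightarrow> ('x \<Rightarrow> 'x) \<Rightarrow> 'x \<Rightarrow> real" where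
  "Lie_f h f x = frechet_derivative h (at x) (f x)"

definition Lie_g :: "('x::real_normed_vector \<Rightarrow> real) \<Rightarrow> ('x \<Rightarrow> 'u \<Rightarrow> 'x) \<Rightarrow> 'x \<Rightarrow> 'u \<Rightarrow> real" where
  "Lie_g h g x u = frechet_derivative h (at x) (g x u)"

text \<open>The supremum condition
  sup_u (Lf h + Lg h u) > -alpha(h x) is unfolded as existence of a u exceeding the bound.\<close>
definition is_CBF_on :: "'x::euclidean_space set \<Rightarrow> ('x \<Rightarrow> 'x) \<Rightarrow> ('x \<Rightarrow> 'u \<Rightarrow> 'x) \<Rightarrow> ('x \<Rightarrow> real) \<Rightarrow> 'x set \<Rightarrow> bool" where
  "is_CBF_on X f g h C \<longleftrightarrow> C = {x\<in>X. h x \<ge> 0} \<and> C1_on X h \<and>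
     (\<exists>\<alpha>. ext_class_Kinf \<alpha> \<and> (\<forall>x\<in>X. \<exists>u. Lie_f h f x + Lie_g h g x u > - \<alpha> (h x)))"

definition blockmul :: "real^'a^'a \<Rightarrow> real^'b^'a \<Rightarrow> real^'a^'b \<Rightarrow> real^'b^'b
    \<Rightarrow> ((real^'a) \<times> (real^'b)) \<Rightarrow> ((real^'a) \<times> (real^'b))" where
  "blockmul A11 A12 A21 A22 v = (A11 *v fst v + A12 *v snd v, A21 *v fst v + A22 *v snd v)"

text \<open>Control-affine form: state x = (q, qdot), q = (q1, q2), qdot = (qdot1, qdot2).
  f(x) = (qdot, - D(q)^{-1} H(q,qdot)), g(x) u = (0, D(q)^{-1} (B1 u, 0)).\<close>
definition ua_f :: "((real^'a) \<times> (real^'b) \<Rightarrow> real^'a^'a) \<Rightarrow> ((real^'a) \<times> (real^'b) \<Rightarrow> real^'b^'a)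
    \<Rightarrow> ((real^'a) \<times> (real^'b) \<Rightarrow> real^'a^'b) \<Rightarrow> ((real^'a) \<times> (real^'b) \<Rightarrow> real^'b^'b)
    \<Rightarrow> (((real^'a) \<times> (real^'b)) \<times> ((real^'a) \<times> (real^'b)) \<Rightarrow> (real^'a) \<times> (real^'b))
    \<Rightarrow> ((real^'a) \<times> (real^'b)) \<times> ((real^'a) \<times> (real^'b)) \<Rightarrow> ((real^'a) \<times> (real^'b)) \<times> ((real^'a) \<times> (real^'b))" where
  "ua_f D11 D12 D21 D22 H x =
     (snd x, - inv (blockmul (D11 (fst x)) (D12 (fst x)) (D21 (fst x)) (D22 (fst x))) (H x))"

definition ua_g :: "((real^'a) \<times> (real^'b) \<Rightarrow> real^'a^'a) \<Rightarrow> ((real^'a) \<times> (real^'b) \<Rightarrow> real^'b^'a)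
    \<Rightarrow> ((real^'a) \<times> (real^'b) \<Rightarrow> real^'a^'b) \<Rightarrow> ((real^'a) \<times> (real^'b) \<Rightarrow> real^'b^'b)
    \<Rightarrow> real^'m^'a
    \<Rightarrow> ((real^'a) \<times> (real^'b)) \<times> ((real^'a) \<times> (real^'b)) \<Rightarrow> real^'m \<Rightarrow> ((real^'a) \<times> (real^'b)) \<times> ((real^'a) \<times> (real^'b))" where
  "ua_g D11 D12 D21 D22 B1 x u =
     (0, inv (blockmul (D11 (fst x)) (D12 (fst x)) (D21 (fst x)) (D22 (fst x))) (B1 *v u, 0))"

definition schur1 :: "((real^'a) \<times> (real^'b) \<Rightarrow> real^'a^'a) \<Rightarrow> ((real^'a) \<times> (real^'b) \<Rightarrow> real^'b^'a)
    \<Rightarrow> ((real^'a) \<times> (real^'b) \<Rightarrow> real^'a^'b) \<Rightarrow> ((real^'a) \<times> (real^'b) \<Rightarrow> real^'b^'b)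
    \<Rightarrow> (real^'a) \<times> (real^'b) \<Rightarrow> real^'a^'a" where
  "schur1 D11 D12 D21 D22 q = D11 q - D12 q ** matrix_inv (D22 q) ** D21 q"

definition ua_h :: "((real^'a) \<times> (real^'b) \<Rightarrow> real^'a^'a) \<Rightarrow> ((real^'a) \<times> (real^'b) \<Rightarrow> real^'b^'a)
    \<Rightarrow> ((real^'a) \<times> (real^'b) \<Rightarrow> real^'a^'b) \<Rightarrow> ((real^'a) \<times> (real^'b) \<Rightarrow> real^'b^'b)
    \<Rightarrow> (real^'a \<Rightarrow> real) \<Rightarrow> (real^'a \<Rightarrow> real^'a) \<Rightarrow> real
    \<Rightarrow> ((real^'a) \<times> (real^'b)) \<times> ((real^'a) \<times> (real^'b)) \<Rightarrow> real" where
  "ua_h D11 D12 D21 D22 h01 k01 \<mu> x =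
     (let q = fst x; q1 = fst q; e = fst (snd x) - k01 q1
      in h01 q1 - (1 / (2 * \<mu>)) * (e \<bullet> (schur1 D11 D12 D21 D22 q *v e)))"

end

theory Submission
  imports Defs
begin
definition C1w :: "'x::real_normed_vector set \<Rightarrow> ('x \<Rightarrow> 'y::real_normed_vector) \<Rightarrow> bool" where
  "C1w S f \<longleftrightarrow> (\<exists>f'. (\<forall>x\<in>S. (f has_derivative f' x) (at x)) \<and> (\<forall>v. continuous_on S (\<lambda>x. f' x v)))"

lemma C1w_cont: "C1w S f \<Longrightarrow> continuous_on S f"
  unfolding C1w_def by (meson continuous_at_imp_continuous_on has_derivative_continuous)

lemma C1_on_imp_C1w: "C1_on S f \<Longrightarrow> C1w S f"
  unfolding C1_on_def C1w_def
  apply (elim exE conjE)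
  subgoal for F apply (rule exI[of _ "\<lambda>x. blinfun_apply (F x)"])
    by (auto intro!: continuous_intros)
  done

lemma C1w_imp_C1_on:
  fixes f :: "'x::euclidean_space \<Rightarrow> 'y::real_normed_vector"
  assumes "C1w S f" shows "C1_on S f"
proof -
  from assms obtain f' where d: "\<forall>x\<in>S. (f has_derivative f' x) (at x)" and c: "\<forall>v. continuous_on S (\<lambda>x. f' x v)"
    unfolding C1w_def by blast
  have bl: "x \<in> S \<Longrightarrow> blinfun_apply (Blinfun (f' x)) = f' x" for x
    using d by (auto intro!: bounded_linear_Blinfun_apply has_derivative_bounded_linear)
  show ?thesis unfolding C1_on_def
  proof (intro exI[of _ "\<lambda>x. Blinfun (f' x)"] conjI ballI)
    show "x \<in> S \<Longrightarrow> (f has_derivative blinfun_apply (Blinfun (f' x))) (at x)" for x using d bl by simp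
    show "continuous_on S (\<lambda>x. Blinfun (f' x))"
      apply (rule continuous_on_blinfun_componentwise)
      subgoal for i
      proof -
        have "continuous_on S (\<lambda>x. f' x i)" using c by blast
        then show ?thesis by (rule continuous_on_eq) (simp add: bl)
      qed
      done
  qed
qed

lemma C1w_const[simp]: "C1w S (\<lambda>x. c)"
  unfolding C1w_def by (rule exI[of _ "\<lambda>x v. 0"]) auto

lemma C1w_add: "C1w S f \<Longrightarrow> C1w S g \<Longrightarrow> C1w S (\<lambda>x. f x + g x)"
  unfolding C1w_def apply (elim exE conjE)
  subgoal for f' g' apply (rule exI[of _ "\<lambda>x v. f' x v + g' x v"])
    by (auto intro!: derivative_intros continuous_intros)
  done

lemma C1w_diff: "C1w S f \<Longrightarrow> C1w S g \<Longrightarrow> C1w S (\<lambda>x. f x - g x)"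
  unfolding C1w_def apply (elim exE conjE)
  subgoal for f' g' apply (rule exI[of _ "\<lambda>x v. f' x v - g' x v"])
    by (auto intro!: derivative_intros continuous_intros)
  done

lemma C1w_mult:
  fixes f g :: "'x::real_normed_vector \<Rightarrow> real"
  shows "C1w S f \<Longrightarrow> C1w S g \<Longrightarrow> C1w S (\<lambda>x. f x * g x)"
  apply (frule C1w_cont, frule C1w_cont[of S g])
  unfolding C1w_def apply (elim exE conjE)
  subgoal for f' g' apply (rule exI[of _ "\<lambda>x v. f x * g' x v + f' x v * g x"])
    by (auto intro!: derivative_intros continuous_intros)
  done

lemma C1w_inverse:
  fixes f :: "'x::real_normed_vector \<Rightarrow> real"
  shows "C1w S f \<Longrightarrow> \<forall>x\<in>S. f x \<noteq> 0 \<Longrightarrow> C1w S (\<lambda>x. inverse (f x))"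
  apply (frule C1w_cont)
  unfolding C1w_def apply (elim exE conjE)
  subgoal for f' apply (rule exI[of _ "\<lambda>x v. - (inverse (f x) * f' x v * inverse (f x))"])
    by (auto intro!: derivative_eq_intros continuous_intros)
  done

lemma C1w_sum: "finite I \<Longrightarrow> (\<And>i. i \<in> I \<Longrightarrow> C1w S (f i)) \<Longrightarrow> C1w S (\<lambda>x. \<Sum>i\<in>I. f i x)"
  by (induction I rule: finite_induct) (auto intro!: C1w_add)

lemma C1w_prod:
  fixes f :: "'i \<Rightarrow> 'x::real_normed_vector \<Rightarrow> real"
  shows "finite I \<Longrightarrow> (\<And>i. i \<in> I \<Longrightarrow> C1w S (f i)) \<Longrightarrow> C1w S (\<lambda>x. \<Prod>i\<in>I. f i x)"
  by (induction I rule: finite_induct) (auto intro!: C1w_mult)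

lemma has_derivative_vec_lambda:
  fixes f :: "'i::finite \<Rightarrow> 'x::real_normed_vector \<Rightarrow> 'a::euclidean_space"
  assumes "\<And>i. (f i has_derivative f' i) (at x within S)"
  shows "((\<lambda>y. \<chi> i. f i y) has_derivative (\<lambda>v. \<chi> i. f' i v)) (at x within S)"
  apply (subst has_derivative_componentwise_within)
  apply (auto simp: Basis_vec_def inner_axis)
  apply (intro bounded_linear.has_derivative[OF bounded_linear_inner_left] assms)
  done

lemma C1w_vec:
  fixes f :: "'x::real_normed_vector \<Rightarrow> 'a::euclidean_space ^ 'n"
  assumes "\<And>i. C1w S (\<lambda>x. f x $ i)" shows "C1w S f"
proof -
  have "\<forall>i. \<exists>f'. (\<forall>x\<in>S. ((\<lambda>x. f x $ i) has_derivative f' x) (at x)) \<and> (\<forall>v. continuous_on S (\<lambda>x. f' x v))"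
    using assms unfolding C1w_def by blast
  then obtain F where F: "\<And>i. \<forall>x\<in>S. ((\<lambda>x. f x $ i) has_derivative F i x) (at x)"
     "\<And>i v. continuous_on S (\<lambda>x. F i x v)" by metis
  show ?thesis unfolding C1w_def
  proof (intro exI[of _ "\<lambda>x v. \<chi> i. F i x v"] conjI ballI allI)
    fix x assume "x \<in> S"
    then have "((\<lambda>y. \<chi> i. f y $ i) has_derivative (\<lambda>v. \<chi> i. F i x v)) (at x)"
      using F(1) by (intro has_derivative_vec_lambda) auto
    then show "(f has_derivative (\<lambda>v. \<chi> i. F i x v)) (at x)" by simp
  next
    fix v show "continuous_on S (\<lambda>x. \<chi> i. F i x v)"
      using F(2) by (intro continuous_on_vec_lambda) auto
  qed
qed

lemma C1w_nth:
  fixes f :: "'x::real_normed_vector \<Rightarrow> 'a::real_normed_vector ^ 'n"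
  assumes "C1w S f" shows "C1w S (\<lambda>x. f x $ i)"
  using assms unfolding C1w_def apply (elim exE conjE)
  subgoal for f' apply (rule exI[of _ "\<lambda>x v. f' x v $ i"])
    by (auto intro!: bounded_linear.has_derivative[OF bounded_linear_vec_nth] continuous_intros)
  done

lemma C1w_cong:
  assumes "open S" "\<And>x. x \<in> S \<Longrightarrow> f x = g x" "C1w S f" shows "C1w S g"
  using assms(3) unfolding C1w_def apply (elim exE conjE)
  subgoal for f' apply (rule exI[of _ f'])
    using assms(1,2) by (auto intro: has_derivative_transform_within_open)
  done

lemma matrix_inv_props:
  assumes "invertible A" shows "A ** matrix_inv A = mat 1" "matrix_inv A ** A = mat 1"
  using someI_ex[OF assms[unfolded invertible_def]] unfolding matrix_inv_def by auto

lemma matrix_inv_cramer: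
  fixes A :: "real^'n^'n"
  assumes "invertible A"
  shows "matrix_inv A $ k $ j = det (\<chi> r c. if c = k then axis j 1 $ r else A $ r $ c) / det A"
proof -
  define x where "x = (\<chi> k. matrix_inv A $ k $ j)"
  have "A *v x = (\<chi> r. (A ** matrix_inv A) $ r $ j)"
    by (simp add: x_def matrix_vector_mult_def matrix_matrix_mult_def vec_eq_iff)
  also have "\<dots> = axis j 1" using matrix_inv_props(1)[OF assms]
    by (simp add: mat_def axis_def vec_eq_iff)
  finally have "A *v x = axis j 1" .
  moreover have "det A \<noteq> 0" using assms invertible_det_nz by blast
  ultimately have "x = (\<chi> k. det(\<chi> i j'. if j'=k then axis j 1 $ i else A$i$j') / det A)"
    using cramer by blast
  then have "x $ k = det (\<chi> r c. if c = k then axis j 1 $ r else A $ r $ c) / det A" by simp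
  then show ?thesis by (simp add: x_def)
qed

lemma C1w_if: "C1w S f \<Longrightarrow> C1w S g \<Longrightarrow> C1w S (\<lambda>x. if P then f x else g x)"
  by (cases P) auto

lemma C1w_det:
  fixes F :: "'x::real_normed_vector \<Rightarrow> real^'n^'n"
  assumes "\<And>i j. C1w S (\<lambda>x. F x $ i $ j)" shows "C1w S (\<lambda>x. det (F x))"
  unfolding det_def
  by (intro C1w_sum C1w_mult C1w_prod assms C1w_const finite_permutations) auto

lemma C1w_matrix_inv:
  fixes F :: "'x::real_normed_vector \<Rightarrow> real^'n^'n"
  assumes S: "open S" and inv: "\<And>x. x \<in> S \<Longrightarrow> invertible (F x)"
    and F: "\<And>i j. C1w S (\<lambda>x. F x $ i $ j)"
  shows "C1w S (\<lambda>x. matrix_inv (F x))"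
proof (intro C1w_vec)
  fix k j
  have "C1w S (\<lambda>x. det (\<chi> r c. if c = k then axis j 1 $ r else F x $ r $ c) * inverse (det (F x)))"
    apply (intro C1w_mult C1w_inverse C1w_det)
    using F inv invertible_det_nz by (auto intro!: C1w_det C1w_if)
  then show "C1w S (\<lambda>x. matrix_inv (F x) $ k $ j)"
    by (rule C1w_cong[OF S, rotated]) (simp add: matrix_inv_cramer inv divide_inverse)
qed

lemma C1w_matmul:
  fixes A :: "'x::real_normed_vector \<Rightarrow> real^'n^'m" and B :: "'x \<Rightarrow> real^'p^'n"
  assumes "C1w S A" "C1w S B" shows "C1w S (\<lambda>x. A x ** B x)"
  by (intro C1w_vec) (auto simp: matrix_matrix_mult_def intro!: C1w_sum C1w_mult C1w_nth assms)

lemma C1w_schur: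
  assumes "open Q" "C1_on Q D11" "C1_on Q D12" "C1_on Q D21" "C1_on Q D22"
    and "\<And>q. q \<in> Q \<Longrightarrow> invertible (D22 q)"
  shows "C1w Q (schur1 D11 D12 D21 D22)"
  unfolding schur1_def
  by (intro C1w_diff C1w_matmul C1_on_imp_C1w assms C1w_matrix_inv C1w_nth)

lemma invertible_of_pd:
  fixes A :: "real^'n^'n"
  assumes "\<And>v. v \<noteq> 0 \<Longrightarrow> v \<bullet> (A *v v) > 0" shows "invertible A"
proof -
  have "inj ((*v) A)"
    by (subst linear_injective_0) (use assms in \<open>auto intro: matrix_vector_mul_linear, metis inner_zero_right order_less_irrefl\<close>)
  then show ?thesis using matrix_left_invertible_injective invertible_left_inverse by blast
qed

lemma linear_blockmul: "linear (blockmul A11 A12 A21 A22)"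
  by (rule linearI) (auto simp: blockmul_def matrix_vector_right_distrib matrix_vector_mult_scaleR algebra_simps)

lemma transpose_matrix_inv_sym:
  fixes A :: "real^'n^'n"
  assumes "invertible A" "transpose A = A" shows "transpose (matrix_inv A) = matrix_inv A"
proof -
  let ?M = "matrix_inv A"
  have "transpose ?M ** A = mat 1"
    using matrix_transpose_mul[of A ?M] matrix_inv_props(1)[OF assms(1)] assms(2) by (simp add: transpose_mat)
  have "transpose ?M = (transpose ?M ** A) ** ?M"
    by (simp only: matrix_mul_assoc[symmetric] matrix_inv_props(1)[OF assms(1)] matrix_mul_rid)
  also have "\<dots> = ?M" unfolding \<open>transpose ?M ** A = mat 1\<close> by (rule matrix_mul_lid)
  finally show ?thesis .
qed

lemma bb_mvmult: "bounded_bilinear ((*v) :: real^'n^'m \<Rightarrow> real^'n \<Rightarrow> real^'m)"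
proof -
  have "bilinear ((*v) :: real^'n^'m \<Rightarrow> real^'n \<Rightarrow> real^'m)"
    unfolding bilinear_def
    by (auto intro!: matrix_vector_mul_linear linearI simp: matrix_vector_mult_add_rdistrib scaleR_matrix_vector_assoc)
  then show ?thesis by (simp add: bilinear_conv_bounded_bilinear)
qed

lemma zero_mvmult[simp]: "(0::real^'n^'m) *v x = 0"
  by (simp add: matrix_vector_mult_def vec_eq_iff)

lemma transpose_diff': "transpose (A - B :: real^'n^'m) = transpose A - transpose B"
  by (simp add: transpose_def vec_eq_iff)

lemma schur_sym:
  assumes "transpose (D11 q) = D11 q" "transpose (D22 q) = D22 q" "D21 q = transpose (D12 q)"
    "invertible (D22 q)"
  shows "transpose (schur1 D11 D12 D21 D22 q) = schur1 D11 D12 D21 D22 q"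
  using assms transpose_matrix_inv_sym[OF assms(4,2)]
  by (simp add: schur1_def transpose_diff' matrix_transpose_mul matrix_mul_assoc)

theorem theorem10:
  fixes Q1 :: "(real^'n1) set" and Q2 :: "(real^'n2) set"
    and D11 :: "(real^'n1) \<times> (real^'n2) \<Rightarrow> real^'n1^'n1"
    and D12 :: "(real^'n1) \<times> (real^'n2) \<Rightarrow> real^'n2^'n1"
    and D21 :: "(real^'n1) \<times> (real^'n2) \<Rightarrow> real^'n1^'n2"
    and D22 :: "(real^'n1) \<times> (real^'n2) \<Rightarrow> real^'n2^'n2"
    and H :: "((real^'n1) \<times> (real^'n2)) \<times> ((real^'n1) \<times> (real^'n2)) \<Rightarrow> (real^'n1) \<times> (real^'n2)"
    and B1 :: "real^'m^'n1"
    and h01 :: "real^'n1 \<Rightarrow> real" and k01 :: "real^'n1 \<Rightarrow> real^'n1"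
    and \<alpha> :: "real \<Rightarrow> real" and \<mu> :: real
  assumes Q_open: "open Q1" "open Q2"
    and D_sym: "\<forall>q\<in>Q1 \<times> Q2. transpose (D11 q) = D11 q \<and> transpose (D22 q) = D22 q
                              \<and> D21 q = transpose (D12 q)"
    and D_pd: "\<forall>q\<in>Q1 \<times> Q2. \<forall>v. v \<noteq> 0 \<longrightarrow> v \<bullet> blockmul (D11 q) (D12 q) (D21 q) (D22 q) v > 0"
    and D_C1: "C1_on (Q1 \<times> Q2) D11" "C1_on (Q1 \<times> Q2) D12" "C1_on (Q1 \<times> Q2) D21" "C1_on (Q1 \<times> Q2) D22"
    and h01_C1: "C1_on Q1 h01"
    and B1_pinv: "\<forall>v. v v* B1 = 0 \<longrightarrow> v = 0"
    and k01_C1: "C1_on Q1 k01"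
    and \<alpha>_K: "ext_class_Kinf \<alpha>"
    and k01_safe: "\<forall>q1\<in>Q1. frechet_derivative h01 (at q1) (k01 q1) > - \<alpha> (h01 q1)"
    and \<mu>_pos: "\<mu> > 0"
  shows "is_CBF_on ((Q1 \<times> Q2) \<times> UNIV)
           (ua_f D11 D12 D21 D22 H) (ua_g D11 D12 D21 D22 B1)
           (ua_h D11 D12 D21 D22 h01 k01 \<mu>)
           {x \<in> (Q1 \<times> Q2) \<times> UNIV. ua_h D11 D12 D21 D22 h01 k01 \<mu> x \<ge> 0}"
proof -
  let ?Q = "Q1 \<times> Q2"
  let ?X = "?Q \<times> (UNIV :: ((real^'n1) \<times> (real^'n2)) set)"
  define S where "S = schur1 D11 D12 D21 D22"
  define c where "c = 1 / (2 * \<mu>)"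
  define h where "h = ua_h D11 D12 D21 D22 h01 k01 \<mu>"
  define e where "e x = fst (snd x) - k01 (fst (fst x))" for x :: "((real^'n1) \<times> (real^'n2)) \<times> ((real^'n1) \<times> (real^'n2))"
  have c_pos: "c > 0" using \<mu>_pos by (simp add: c_def)
  have openQ: "open ?Q" using Q_open by (simp add: open_Times)
  have openX: "open ?X" using openQ by (simp add: open_Times)
  have inv22: "invertible (D22 q)" if "q \<in> ?Q" for q
  proof (rule invertible_of_pd)
    fix v :: "real^'n2" assume "v \<noteq> 0"
    then have "(0, v) \<bullet> blockmul (D11 q) (D12 q) (D21 q) (D22 q) (0, v) > 0"
      using D_pd that by (metis snd_conv snd_zero)
    then show "v \<bullet> (D22 q *v v) > 0" by (simp add: blockmul_def)
  qed
  have Ssym: "transpose (S q) = S q" if "q \<in> ?Q" for q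
    unfolding S_def using D_sym that inv22[OF that] by (intro schur_sym) auto
  have "C1w ?Q S" unfolding S_def using openQ D_C1 inv22 by (intro C1w_schur) auto
  then obtain S' where S'd: "\<forall>q\<in>?Q. (S has_derivative S' q) (at q)"
      and S'c: "\<forall>v. continuous_on ?Q (\<lambda>q. S' q v)" unfolding C1w_def by blast
  have Scont: "continuous_on ?Q S" using \<open>C1w ?Q S\<close> by (rule C1w_cont)
  obtain Hd where Hdd: "\<forall>x\<in>Q1. (h01 has_derivative blinfun_apply (Hd x)) (at x)" and Hdc: "continuous_on Q1 Hd"
    using h01_C1 unfolding C1_on_def by blast
  obtain Kd where Kdd: "\<forall>x\<in>Q1. (k01 has_derivative blinfun_apply (Kd x)) (at x)" and Kdc: "continuous_on Q1 Kd"
    using k01_C1 unfolding C1_on_def by blast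
  have kcont: "continuous_on Q1 k01" using C1_on_imp_C1w[OF k01_C1] by (rule C1w_cont)
  have hform: "h x = h01 (fst (fst x)) - c * (e x \<bullet> (S (fst x) *v e x))" for x
    by (simp add: h_def ua_h_def Let_def c_def e_def S_def)
  define E where "E x dx = fst (snd dx) - Kd (fst (fst x)) (fst (fst dx))" for x dx :: "((real^'n1) \<times> (real^'n2)) \<times> ((real^'n1) \<times> (real^'n2))"
  define h' where "h' x dx = Hd (fst (fst x)) (fst (fst dx))
     - c * (E x dx \<bullet> (S (fst x) *v e x) + e x \<bullet> (S' (fst x) (fst dx) *v e x + S (fst x) *v E x dx))" for x dx
  have hder: "(h has_derivative h' x) (at x)" if "x \<in> ?X" for x
  proof -
    have q1: "fst (fst x) \<in> Q1" and q: "fst x \<in> ?Q" using that by auto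
    have f1: "((\<lambda>x. fst (fst x)) has_derivative (\<lambda>dx. fst (fst dx))) (at x)"
      by (intro derivative_intros)
    have d1: "((\<lambda>x. h01 (fst (fst x))) has_derivative (\<lambda>dx. Hd (fst (fst x)) (fst (fst dx)))) (at x)"
      using has_derivative_compose[OF f1 Hdd[rule_format, OF q1]] by simp
    have dk: "((\<lambda>x. k01 (fst (fst x))) has_derivative (\<lambda>dx. Kd (fst (fst x)) (fst (fst dx)))) (at x)"
      using has_derivative_compose[OF f1 Kdd[rule_format, OF q1]] by simp
    have de: "(e has_derivative E x) (at x)"
      unfolding e_def[abs_def] E_def by (intro derivative_intros dk)
    have f2: "((\<lambda>x. fst x) has_derivative (\<lambda>dx. fst dx)) (at x)"
      by (intro derivative_intros)
    have dS: "((\<lambda>x. S (fst x)) has_derivative (\<lambda>dx. S' (fst x) (fst dx))) (at x)"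
      using has_derivative_compose[OF f2 S'd[rule_format, OF q]] by simp
    have d4: "((\<lambda>x. S (fst x) *v e x) has_derivative (\<lambda>dx. S (fst x) *v E x dx + S' (fst x) (fst dx) *v e x)) (at x)"
      by (rule bounded_bilinear.FDERIV[OF bb_mvmult dS de])
    have d5: "((\<lambda>x. e x \<bullet> (S (fst x) *v e x)) has_derivative
       (\<lambda>dx. e x \<bullet> (S (fst x) *v E x dx + S' (fst x) (fst dx) *v e x) + E x dx \<bullet> (S (fst x) *v e x))) (at x)"
      by (rule has_derivative_inner[OF de d4])
    have d6: "((\<lambda>x. h01 (fst (fst x)) - c * (e x \<bullet> (S (fst x) *v e x))) has_derivative
       (\<lambda>dx. Hd (fst (fst x)) (fst (fst dx)) - c * (e x \<bullet> (S (fst x) *v E x dx + S' (fst x) (fst dx) *v e x) + E x dx \<bullet> (S (fst x) *v e x)))) (at x)"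
      by (intro has_derivative_diff d1 has_derivative_mult_right d5)
    have "h = (\<lambda>x. h01 (fst (fst x)) - c * (e x \<bullet> (S (fst x) *v e x)))" using hform by auto
    then show ?thesis using d6 unfolding h'_def[abs_def] by (simp add: algebra_simps)
  qed
  have C1h: "C1_on ?X h"
  proof (rule C1w_imp_C1_on, unfold C1w_def, intro exI[of _ h'] conjI ballI allI)
    show "x \<in> ?X \<Longrightarrow> (h has_derivative h' x) (at x)" for x by (rule hder)
    fix dx :: "((real^'n1) \<times> (real^'n2)) \<times> ((real^'n1) \<times> (real^'n2))"
    have im1: "(\<lambda>x. fst (fst x)) ` ?X \<subseteq> Q1" and im2: "fst ` ?X \<subseteq> ?Q" by auto
    have cf1: "continuous_on ?X (\<lambda>x. fst (fst x))" and cf2: "continuous_on ?X fst"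
      by (intro continuous_intros)+
    have cHd: "continuous_on ?X (\<lambda>x. Hd (fst (fst x)))"
      by (rule continuous_on_compose2[OF Hdc cf1 im1])
    have cKd: "continuous_on ?X (\<lambda>x. Kd (fst (fst x)))"
      by (rule continuous_on_compose2[OF Kdc cf1 im1])
    have ck: "continuous_on ?X (\<lambda>x. k01 (fst (fst x)))"
      by (rule continuous_on_compose2[OF kcont cf1 im1])
    have cS: "continuous_on ?X (\<lambda>x. S (fst x))"
      by (rule continuous_on_compose2[OF Scont cf2 im2])
    have cS': "continuous_on ?X (\<lambda>x. S' (fst x) (fst dx))"
      by (rule continuous_on_compose2[OF S'c[rule_format] cf2 im2])
    have ce: "continuous_on ?X e" unfolding e_def[abs_def] by (intro continuous_intros ck)
    have cE: "continuous_on ?X (\<lambda>x. E x dx)" unfolding E_def by (intro continuous_intros cKd)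
    show "continuous_on ?X (\<lambda>x. h' x dx)" unfolding h'_def
      by (intro continuous_intros cHd cE ce cS cS' bounded_bilinear.continuous_on[OF bb_mvmult])
  qed
  have BMsurj: "surj (blockmul (D11 q) (D12 q) (D21 q) (D22 q))" if "q \<in> ?Q" for q
  proof (rule linear_inj_imp_surj[OF linear_blockmul])
    show "inj (blockmul (D11 q) (D12 q) (D21 q) (D22 q))"
    proof (subst linear_injective_0[OF linear_blockmul], intro allI impI)
      fix v assume "blockmul (D11 q) (D12 q) (D21 q) (D22 q) v = 0"
      then show "v = 0" using D_pd that by (metis inner_zero_right order_less_irrefl)
    qed
  qed
  have Lg: "Lie_g h (ua_g D11 D12 D21 D22 B1) x u = - (2 * c) * ((e x v* B1) \<bullet> u)" if "x \<in> ?X" for x u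
  proof -
    define q where "q = fst x"
    have q: "q \<in> ?Q" using that by (auto simp: q_def)
    define w where "w = inv (blockmul (D11 q) (D12 q) (D21 q) (D22 q)) (B1 *v u, 0)"
    have "blockmul (D11 q) (D12 q) (D21 q) (D22 q) w = (B1 *v u, 0)"
      unfolding w_def by (rule surj_f_inv_f[OF BMsurj[OF q]])
    then have eq1: "D11 q *v fst w + D12 q *v snd w = B1 *v u"
      and eq2: "D21 q *v fst w + D22 q *v snd w = 0" by (auto simp: blockmul_def)
    let ?M = "matrix_inv (D22 q)"
    have "snd w = ?M *v (D22 q *v snd w)"
      by (simp add: matrix_vector_mul_assoc matrix_inv_props(2)[OF inv22[OF q]])
    also have "D22 q *v snd w = - (D21 q *v fst w)" using eq2 by (simp add: eq_neg_iff_add_eq_0 add.commute)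
    finally have w2: "snd w = - (?M *v (D21 q *v fst w))"
      using linear_neg[OF matrix_vector_mul_linear[of ?M]] by simp
    have Sw: "S q *v fst w = B1 *v u"
      using eq1 w2 linear_neg[OF matrix_vector_mul_linear[of "D12 q"]]
      by (simp add: S_def schur1_def matrix_vector_mult_diff_rdistrib matrix_vector_mul_assoc[symmetric])
    have gx: "ua_g D11 D12 D21 D22 B1 x u = (0, w)" by (simp add: ua_g_def w_def q_def)
    have S'0: "S' q 0 = 0" using S'd q by (meson has_derivative_bounded_linear bounded_linear.linear linear_0)
    have "Lie_g h (ua_g D11 D12 D21 D22 B1) x u = h' x (0, w)"
      unfolding Lie_g_def gx using frechet_derivative_at[OF hder[OF that]] by simp
    also have "\<dots> = - c * (fst w \<bullet> (S q *v e x) + e x \<bullet> (S q *v fst w))"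
      by (simp add: h'_def E_def S'0 q_def[symmetric] blinfun.zero_right)
    also have "fst w \<bullet> (S q *v e x) = e x \<bullet> (S q *v fst w)"
      by (metis dot_lmul_matrix transpose_matrix_vector Ssym[OF q] inner_commute)
    finally show ?thesis using Sw by (simp add: dot_lmul_matrix)
  qed
  have Lf0: "Lie_f h (ua_f D11 D12 D21 D22 H) x = Hd (fst (fst x)) (k01 (fst (fst x)))"
    if "x \<in> ?X" "e x = 0" for x
  proof -
    have k: "fst (snd x) = k01 (fst (fst x))" using that(2) by (simp add: e_def)
    have "Lie_f h (ua_f D11 D12 D21 D22 H) x = h' x (ua_f D11 D12 D21 D22 H x)"
      unfolding Lie_f_def using frechet_derivative_at[OF hder[OF that(1)]] by simp
    also have "\<dots> = Hd (fst (fst x)) (k01 (fst (fst x)))"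
      using that(2) k by (simp add: h'_def ua_f_def)
    finally show ?thesis .
  qed
  show ?thesis
    unfolding is_CBF_on_def
  proof (intro conjI exI[of _ \<alpha>])
    show "{x \<in> ?X. ua_h D11 D12 D21 D22 h01 k01 \<mu> x \<ge> 0} = {x \<in> ?X. ua_h D11 D12 D21 D22 h01 k01 \<mu> x \<ge> 0}" ..
    show "C1_on ?X (ua_h D11 D12 D21 D22 h01 k01 \<mu>)" using C1h by (simp add: h_def)
    show "ext_class_Kinf \<alpha>" by (rule \<alpha>_K)
    show "\<forall>x\<in>?X. \<exists>u. Lie_f (ua_h D11 D12 D21 D22 h01 k01 \<mu>) (ua_f D11 D12 D21 D22 H) x
        + Lie_g (ua_h D11 D12 D21 D22 h01 k01 \<mu>) (ua_g D11 D12 D21 D22 B1) x u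
        > - \<alpha> (ua_h D11 D12 D21 D22 h01 k01 \<mu> x)"
    proof
      fix x assume x: "x \<in> ?X"
      let ?L = "Lie_f h (ua_f D11 D12 D21 D22 H) x"
      have "\<exists>u. ?L + Lie_g h (ua_g D11 D12 D21 D22 B1) x u > - \<alpha> (h x)"
      proof (cases "e x = 0")
        case True
        have q1: "fst (fst x) \<in> Q1" using x by auto
        have "blinfun_apply (Hd (fst (fst x))) = frechet_derivative h01 (at (fst (fst x)))"
          using frechet_derivative_at[OF Hdd[rule_format, OF q1]] by simp
        then have "?L = frechet_derivative h01 (at (fst (fst x))) (k01 (fst (fst x)))"
          using Lf0[OF x True] by simp
        moreover have "h x = h01 (fst (fst x))" using hform True by simp
        ultimately have "?L > - \<alpha> (h x)" using k01_safe q1 by simp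
        then show ?thesis using Lg[OF x, of 0] by (intro exI[of _ 0]) simp
      next
        case False
        define z where "z = e x v* B1"
        have "z \<noteq> 0" using False B1_pinv by (auto simp: z_def)
        then have zz: "z \<bullet> z > 0" by simp
        define t where "t = (\<bar>?L\<bar> + \<bar>\<alpha> (h x)\<bar> + 1) / (2 * c * (z \<bullet> z))"
        have "Lie_g h (ua_g D11 D12 D21 D22 B1) x ((- t) *\<^sub>R z) = 2 * c * t * (z \<bullet> z)"
          using Lg[OF x] by (simp add: z_def)
        also have "\<dots> = \<bar>?L\<bar> + \<bar>\<alpha> (h x)\<bar> + 1" using zz c_pos by (simp add: t_def)
        finally show ?thesis by (intro exI[of _ "(- t) *\<^sub>R z"]) linarith
      qed
      then show "\<exists>u. Lie_f (ua_h D11 D12 D21 D22 h01 k01 \<mu>) (ua_f D11 D12 D21 D22 H) x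
        + Lie_g (ua_h D11 D12 D21 D22 h01 k01 \<mu>) (ua_g D11 D12 D21 D22 B1) x u
        > - \<alpha> (ua_h D11 D12 D21 D22 h01 k01 \<mu> x)" by (simp add: h_def)
    qed
  qed
qed
end
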